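(* Let $k_+,k_-$ be integers with $0\le k_-\le k_+$. Let $\psi(x)$ denote the smallest prime not smaller than $x$ and set $p\triangleq\psi(k_++k_-+1)$. Let $m,t$ be positive integers such that $2t\le p^{\lceil m/2\rceil}-2$, and set $n=p^m-1$. Then $\mathbb{Z}^n$ can be lattice packed by $\mathcal{B}(n,t,k_+,k_-)$ with density \[\delta = \frac{\sum_{i=0}^t \binom{n}{i}(k_++k_-)^i}{(n+1)^{\lceil 2t(1-1/p)\rceil} }.\]
   Context: $\mathcal{B}(n,t,k_+,k_-)=\{\mathbf{x}\in\mathbb{Z}^n : -k_-\le x_i\le k_+ \text{ for all } i,\ \mathrm{wt}(\mathbf{x})\le t\}$, where $\mathrm{wt}$ is the Hamming weight. A lattice packing of $\mathbb{Z}^n$ by $\mathcal{B}$ is a lattice $\Lambda\subseteq\mathbb{Z}^n$ (additive subgroup) such that the translates $\mathbf{v}+\mathcal{B}$, $\mathbf{v}\in\Lambda$, are pairwise disjoint; its density is $|\mathcal{B}|/\mathrm{vol}(\Lambda)$, where $\mathrm{vol}(\Lambda)=|\mathbb{Z}^n/\Lambda|$. *)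

theory Defs
  imports Complex_Main "HOL-Computational_Algebra.Primes" "HOL-Library.Function_Algebras"
begin

text \<open>Vectors of Z^n are modelled as functions nat => int vanishing outside {0..<n}.\<close>
definition Zn :: "nat \<Rightarrow> (nat \<Rightarrow> int) set" where
  "Zn n = {x. \<forall>i\<ge>n. x i = 0}"

definition hwt :: "nat \<Rightarrow> (nat \<Rightarrow> int) \<Rightarrow> nat" where
  "hwt n x = card {i. i < n \<and> x i \<noteq> 0}"

definition ball_B :: "nat \<Rightarrow> nat \<Rightarrow> nat \<Rightarrow> nat \<Rightarrow> (nat \<Rightarrow> int) set" where
  "ball_B n t kp km = {x \<in> Zn n. (\<forall>i<n. - int km \<le> x i \<and> x i \<le> int kp) \<and> hwt n x \<le> t}"

definition is_lattice :: "nat \<Rightarrow> (nat \<Rightarrow> int) set \<Rightarrow> bool" where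
  "is_lattice n L \<longleftrightarrow> L \<subseteq> Zn n \<and> 0 \<in> L \<and> (\<forall>x\<in>L. \<forall>y\<in>L. x + y \<in> L) \<and> (\<forall>x\<in>L. - x \<in> L)"

definition cosets :: "nat \<Rightarrow> (nat \<Rightarrow> int) set \<Rightarrow> (nat \<Rightarrow> int) set set" where
  "cosets n L = (\<lambda>x. (\<lambda>y. x + y) ` L) ` Zn n"

definition vol :: "nat \<Rightarrow> (nat \<Rightarrow> int) set \<Rightarrow> nat" where
  "vol n L = card (cosets n L)"

definition is_lattice_packing :: "nat \<Rightarrow> (nat \<Rightarrow> int) set \<Rightarrow> (nat \<Rightarrow> int) set \<Rightarrow> bool" where
  "is_lattice_packing n L B \<longleftrightarrow> is_lattice n L \<and>
     (\<forall>v\<in>L. \<forall>w\<in>L. v \<noteq> w \<longrightarrow> ((\<lambda>b. v + b) ` B) \<inter> ((\<lambda>b. w + b) ` B) = {})"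

definition density :: "nat \<Rightarrow> (nat \<Rightarrow> int) set \<Rightarrow> (nat \<Rightarrow> int) set \<Rightarrow> real" where
  "density n L B = real (card B) / real (vol n L)"

definition psi :: "nat \<Rightarrow> nat" where
  "psi x = (LEAST q. prime q \<and> x \<le> q)"

end

theory Submission
  imports Defs "HOL-Algebra.Algebraic_Closure" "HOL-Number_Theory.Residues" "HOL-Library.FuncSet"
begin


locale acf_char = algebraically_closed R for R (structure) +
  fixes p :: nat and iota :: "int \<Rightarrow> 'a"
  assumes prime_p: "Factorial_Ring.prime p"
    and iota_carrier[simp]: "iota k \<in> carrier R"
    and iota_add: "iota (a + b) = iota a \<oplus> iota b"
    and iota_mult: "iota (a * b) = iota a \<otimes> iota b"
    and iota_one[simp]: "iota 1 = \<one>"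
    and iota_zero_iff: "iota k = \<zero> \<longleftrightarrow> int p dvd k"
begin

lemma iota_zero[simp]: "iota 0 = \<zero>"
  using iota_zero_iff by simp

lemma iota_p[simp]: "iota (int p) = \<zero>"
  using iota_zero_iff by simp

lemma iota_neg: "iota (- a) = \<ominus> iota a"
proof -
  have "iota (- a) \<oplus> iota a = \<zero>" using iota_add[of "-a" a] by simp
  thus ?thesis by (simp add: local.minus_equality)
qed

lemma iota_diff: "iota (a - b) = iota a \<ominus> iota b"
  using iota_add[of a "-b"] iota_neg[of b] by (simp add: a_minus_def)

lemma iota_pow: "iota (a ^ n) = iota a [^] n"
  by (induction n) (simp_all add: iota_mult m_comm)

lemma binomial:
  assumes a: "a \<in> carrier R" and b: "b \<in> carrier R"
  shows "(a \<oplus> b) [^] n = (\<Oplus>k\<in>{..n}. iota (int (n choose k)) \<otimes> (a [^] k \<otimes> b [^] (n - k)))"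
proof (induction n)
  case 0
  then show ?case using a b by simp
next
  case (Suc n)
  define T where "T = (\<lambda>k. iota (int (n choose k)) \<otimes> (a [^] k \<otimes> b [^] (n - k)))"
  define U where "U = (\<lambda>k. iota (int (if k = 0 then 0 else n choose (k - 1))) \<otimes> (a [^] k \<otimes> b [^] (Suc n - k)))"
  define V where "V = (\<lambda>k. iota (int (n choose k)) \<otimes> (a [^] k \<otimes> b [^] (Suc n - k)))"
  have T: "T \<in> A \<rightarrow> carrier R" for A using a b by (auto simp: T_def)
  have U: "U \<in> A \<rightarrow> carrier R" for A using a b by (auto simp: U_def)
  have V: "V \<in> A \<rightarrow> carrier R" for A using a b by (auto simp: V_def)
  have "(a \<oplus> b) [^] Suc n = (a \<oplus> b) [^] n \<otimes> (a \<oplus> b)" by simp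
  also have "\<dots> = finsum R T {..n} \<otimes> a \<oplus> finsum R T {..n} \<otimes> b"
    using Suc a b T by (simp add: T_def r_distr)
  also have "finsum R T {..n} \<otimes> a = (\<Oplus>k\<in>{..n}. T k \<otimes> a)"
    using T a by (simp add: finsum_ldistr)
  also have "\<dots> = (\<Oplus>k\<in>{..n}. U (Suc k))"
    apply (rule finsum_cong')
    using a b by (auto simp: T_def U_def m_ac)
  also have "\<dots> = finsum R U {..Suc n}"
  proof -
    have u0: "U 0 = \<zero>" using a b by (simp add: U_def)
    have "finsum R U {..Suc n} = (\<Oplus>k\<in>{..n}. U (Suc k)) \<oplus> U 0" using finsum_Suc2[of U n] U by blast
    moreover have "(\<Oplus>k\<in>{..n}. U (Suc k)) \<in> carrier R" using U by (intro finsum_closed) auto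
    ultimately show ?thesis using u0 by simp
  qed
  also have "finsum R T {..n} \<otimes> b = (\<Oplus>k\<in>{..n}. T k \<otimes> b)"
    using T b by (simp add: finsum_ldistr)
  also have "\<dots> = (\<Oplus>k\<in>{..n}. V k)"
    apply (rule finsum_cong')
    using a b by (auto simp: T_def V_def m_ac Suc_diff_le)
  also have "\<dots> = finsum R V {..Suc n}"
  proof -
    have v0: "V (Suc n) = \<zero>" using a b by (simp add: V_def binomial_eq_0)
    have "finsum R V {..Suc n} = V (Suc n) \<oplus> (\<Oplus>k\<in>{..n}. V k)" using finsum_Suc[of V n] V by blast
    moreover have "(\<Oplus>k\<in>{..n}. V k) \<in> carrier R" using V by (intro finsum_closed) auto
    ultimately show ?thesis using v0 by simp
  qed
  also have "finsum R U {..Suc n} \<oplus> finsum R V {..Suc n} = (\<Oplus>k\<in>{..Suc n}. U k \<oplus> V k)"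
    using finsum_addf[OF U V] by simp
  also have "\<dots> = (\<Oplus>k\<in>{..Suc n}. iota (int (Suc n choose k)) \<otimes> (a [^] k \<otimes> b [^] (Suc n - k)))"
  proof (rule finsum_cong')
    fix k assume "k \<in> {..Suc n}"
    have "int (Suc n choose k) = int (if k = 0 then 0 else n choose (k - 1)) + int (n choose k)"
      by (cases k) auto
    then show "U k \<oplus> V k = iota (int (Suc n choose k)) \<otimes> (a [^] k \<otimes> b [^] (Suc n - k))"
      using a b by (simp add: U_def V_def iota_add l_distr)
  qed (use a b in auto)
  finally show ?case .
qed

lemma p_gt1: "p > 1" using prime_p prime_gt_1_nat by blast

lemma frob:
  assumes a: "a \<in> carrier R" and b: "b \<in> carrier R"
  shows "(a \<oplus> b) [^] p = a [^] p \<oplus> b [^] p"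
proof -
  obtain r where pr: "p = Suc (Suc r)" using p_gt1 by (metis less_iff_Suc_add add_Suc_right add_0 Suc_eq_plus1 add.commute)
  define f where "f = (\<lambda>k. iota (int (p choose k)) \<otimes> (a [^] k \<otimes> b [^] (p - k)))"
  have f: "f \<in> A \<rightarrow> carrier R" for A using a b by (auto simp: f_def)
  have "(a \<oplus> b) [^] p = finsum R f {..Suc (Suc r)}" using binomial[OF a b, of p] by (simp add: f_def pr)
  also have "\<dots> = f (Suc (Suc r)) \<oplus> finsum R f {..Suc r}" using finsum_Suc[of f "Suc r"] f by blast
  also have "finsum R f {..Suc r} = (\<Oplus>k\<in>{..r}. f (Suc k)) \<oplus> f 0" using finsum_Suc2[of f r] f by blast
  also have "(\<Oplus>k\<in>{..r}. f (Suc k)) = (\<Oplus>k\<in>{..r}. \<zero>)"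
  proof (rule finsum_cong')
    fix k assume k: "k \<in> {..r}"
    have "p dvd (p choose Suc k)" using dvd_choose_prime[of "Suc k" p] prime_p k pr by auto
    hence "iota (int (p choose Suc k)) = \<zero>" using iota_zero_iff by (simp add: int_dvd_int_iff) 
    thus "f (Suc k) = \<zero>" using a b by (simp add: f_def)
  qed auto
  also have "(\<Oplus>k\<in>{..r}. \<zero>) = \<zero>" by (rule finsum_zero)
  finally show ?thesis using a b by (simp add: f_def pr a_comm)
qed

lemma frob_pow:
  assumes a: "a \<in> carrier R" and b: "b \<in> carrier R"
  shows "(a \<oplus> b) [^] (p ^ e) = a [^] (p ^ e) \<oplus> b [^] (p ^ e)"
proof (induction e)
  case (Suc e)
  have "(a \<oplus> b) [^] (p ^ Suc e) = ((a \<oplus> b) [^] (p ^ e)) [^] p"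
    using a b by (simp add: nat_pow_pow mult.commute)
  also have "\<dots> = (a [^] (p ^ e)) [^] p \<oplus> (b [^] (p ^ e)) [^] p"
    using Suc a b by (simp add: frob)
  finally show ?case using a b by (simp add: nat_pow_pow mult.commute)
qed (use a b in simp)

lemma zero_pow_p[simp]: "\<zero> [^] (p ^ e) = \<zero>" "\<zero> [^] p = \<zero>"
  using p_gt1 by (simp_all add: nat_pow_zero)

lemma frob_neg:
  assumes a: "a \<in> carrier R"
  shows "(\<ominus> a) [^] (p ^ e) = \<ominus> (a [^] (p ^ e))"
proof -
  have "a [^] (p ^ e) \<oplus> (\<ominus> a) [^] (p ^ e) = (a \<oplus> \<ominus> a) [^] (p ^ e)"
    using frob_pow[of a "\<ominus> a" e] a by simp
  also have "\<dots> = \<zero>" using a p_gt1 by (simp add: r_neg)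
  finally have "(\<ominus> a) [^] (p ^ e) \<oplus> a [^] (p ^ e) = \<zero>" using a by (simp add: a_comm)
  then show ?thesis using a by (intro minus_equality[symmetric]) auto
qed

lemma frob_minus:
  assumes a: "a \<in> carrier R" and b: "b \<in> carrier R"
  shows "(a \<ominus> b) [^] (p ^ e) = a [^] (p ^ e) \<ominus> b [^] (p ^ e)"
  using frob_pow[of a "\<ominus> b" e] frob_neg[of b e] a b by (simp add: a_minus_def)

lemma frob_sum:
  assumes "finite A" "f \<in> A \<rightarrow> carrier R"
  shows "(finsum R f A) [^] (p ^ e) = (\<Oplus>i\<in>A. f i [^] (p ^ e))"
  using assms
proof (induction A rule: finite_induct)
  case empty
  then show ?case using p_gt1 by simp
next
  case (insert x F)
  have "(\<Oplus>i\<in>insert x F. f i [^] (p ^ e)) = f x [^] (p ^ e) \<oplus> (\<Oplus>i\<in>F. f i [^] (p ^ e))"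
    by (rule finsum_insert) (use insert in auto)
  then show ?case using insert by (simp add: finsum_insert frob_pow finsum_closed)
qed

lemma iota_nat_frob: "iota (int k) [^] p = iota (int k)"
proof (induction k)
  case 0 then show ?case using p_gt1 by simp
next
  case (Suc k)
  have "iota (int (Suc k)) = \<one> \<oplus> iota (int k)" by (simp add: iota_add)
  then show ?case using frob[of "\<one>" "iota (int k)"] Suc by simp
qed

lemma iota_frob: "iota k [^] p = iota k"
proof (cases "k \<ge> 0")
  case True
  then show ?thesis using iota_nat_frob[of "nat k"] by simp
next
  case False
  then have "k = - int (nat (-k))" by simp
  then have "iota k = \<ominus> iota (int (nat (-k)))" by (metis iota_neg)
  then show ?thesis using frob_neg[of "iota (int (nat (-k)))" 1] iota_nat_frob[of "nat (-k)"] by simp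
qed

lemma iota_frob_pow: "iota k [^] (p ^ e) = iota k"
proof (induction e)
  case (Suc e)
  then show ?case using iota_frob[of k]
    by (simp add: nat_pow_pow[symmetric] mult.commute)
qed simp

end


context acf_char
begin

definition xpoly :: "nat \<Rightarrow> 'a \<Rightarrow> 'a list" where
  "xpoly N c = monom \<one> (N - 2) @ [\<ominus> \<one>, c]"

lemma xpoly_carrier:
  assumes "c \<in> carrier R"
  shows "xpoly N c \<in> carrier (poly_ring R)"
proof -
  have "polynomial (carrier R) (xpoly N c)"
    using assms by (intro polynomialI) (auto simp: xpoly_def monom_def)
  thus ?thesis by (simp add: univ_poly_carrier)
qed

lemma xpoly_degree: "N \<ge> 2 \<Longrightarrow> degree (xpoly N c) = N"
  by (simp add: xpoly_def monom_def)

lemma xpoly_nonempty: "xpoly N c \<noteq> []"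
  by (simp add: xpoly_def)

lemma xpoly_eval:
  assumes "c \<in> carrier R" "x \<in> carrier R" "N \<ge> 2"
  shows "eval (xpoly N c) x = x [^] N \<ominus> x \<oplus> c"
proof -
  have "eval (xpoly N c) x = eval (monom \<one> (N - 2)) x \<otimes> x [^] length [\<ominus> \<one>, c] \<oplus> eval [\<ominus> \<one>, c] x"
    unfolding xpoly_def using assms by (intro eval_append) (auto simp: monom_def)
  also have "eval (monom \<one> (N - 2)) x = x [^] (N - 2)"
    using assms by (simp add: eval_monom)
  also have "eval [\<ominus> \<one>, c] x = \<ominus> x \<oplus> c"
    using assms by (simp add: l_minus)
  also have "x [^] (N - 2) \<otimes> x [^] length [\<ominus> \<one>, c] = x [^] N"
  proof -
    have l: "length [\<ominus> \<one>, c] = 2" by simp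
    have "x [^] (N - 2) \<otimes> x [^] (2::nat) = x [^] (N - 2 + 2)"
      using assms by (simp only: nat_pow_mult)
    thus ?thesis using assms by (simp only: l le_add_diff_inverse2)
  qed
  finally show ?thesis using assms by (simp add: a_minus_def a_assoc)
qed

lemma carrier_infinite: "infinite (carrier R)"
proof
  assume fin: "finite (carrier R)"
  define N where "N = card (carrier R)"
  have "{\<zero>, \<one>} \<subseteq> carrier R" by auto
  hence "card {\<zero>, \<one>} \<le> N" unfolding N_def using fin by (intro card_mono) auto
  hence N2: "N \<ge> 2" by simp
  have xN: "x [^] N = x" if x: "x \<in> carrier R" for x
  proof (cases "x = \<zero>")
    case True thus ?thesis using N2 by (simp add: nat_pow_zero)
  next
    case False
    interpret M: group "Multiplicative_Group.mult_of R" by (rule field_mult_group)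
    have "x \<in> carrier (Multiplicative_Group.mult_of R)" using x False by simp
    hence "x [^]\<^bsub>Multiplicative_Group.mult_of R\<^esub> order (Multiplicative_Group.mult_of R) = \<one>\<^bsub>Multiplicative_Group.mult_of R\<^esub>"
      by (rule M.pow_order_eq_1)
    hence "x [^] (N - 1) = \<one>"
      using order_mult_of[OF fin] by (simp add: N_def order_def Multiplicative_Group.mult_of_simps)
    hence "x [^] (N - 1) \<otimes> x = x" using x by simp
    moreover have "x [^] (N - 1) \<otimes> x = x [^] N" using x N2
      by (metis Suc_diff_1 less_le_trans nat_pow_Suc pos2)
    ultimately show ?thesis by simp
  qed
  define U where "U = xpoly N (\<ominus> \<one>)"
  have U: "U \<in> carrier (poly_ring R)" unfolding U_def by (rule xpoly_carrier) simp
  have "splitted U" by (rule roots_over_carrier[OF U])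
  hence "size (roots U) = N" using xpoly_degree[OF N2] by (simp add: splitted_def U_def)
  hence "roots U \<noteq> {#}" using N2 by auto
  then obtain x where "x \<in># roots U" by blast
  hence "is_root U x" using roots_mem_iff_is_root[OF U] by simp
  hence x: "x \<in> carrier R" and "eval U x = \<zero>" by (auto simp: is_root_def)
  moreover have "eval U x = \<ominus> \<one>" using xpoly_eval[of "\<ominus> \<one>" x N] x N2 xN[OF x] by (simp add: U_def r_neg a_minus_def)
  ultimately show False by simp
qed


abbreviation "PR \<equiv> poly_ring R"

lemma PR_domain: "domain PR"
  by (rule univ_poly_is_domain[OF carrier_is_subring])

lemma ev_cring_hom:
  assumes "x \<in> carrier R"
  shows "ring_hom_cring PR R (\<lambda>f. eval f x)"
  by (rule eval_cring_hom[OF carrier_is_subring assms])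

lemma ev_hom: "x \<in> carrier R \<Longrightarrow> (\<lambda>f. eval f x) \<in> ring_hom PR R"
  by (rule eval_is_hom[OF carrier_is_subring])

lemma ev_mult: "x \<in> carrier R \<Longrightarrow> f \<in> carrier PR \<Longrightarrow> g \<in> carrier PR \<Longrightarrow>
  eval (f \<otimes>\<^bsub>PR\<^esub> g) x = eval f x \<otimes> eval g x"
  by (rule ring_hom_mult[OF ev_hom])

lemma ev_add: "x \<in> carrier R \<Longrightarrow> f \<in> carrier PR \<Longrightarrow> g \<in> carrier PR \<Longrightarrow>
  eval (f \<oplus>\<^bsub>PR\<^esub> g) x = eval f x \<oplus> eval g x"
  by (rule ring_hom_add[OF ev_hom])

lemma ev_neg: "x \<in> carrier R \<Longrightarrow> f \<in> carrier PR \<Longrightarrow>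
  eval (\<ominus>\<^bsub>PR\<^esub> f) x = \<ominus> eval f x"
  by (rule ring_hom_cring.hom_a_inv[OF ev_cring_hom])

lemma ev_one: "x \<in> carrier R \<Longrightarrow> eval \<one>\<^bsub>PR\<^esub> x = \<one>"
  by (rule ring_hom_one[OF ev_hom])

lemma ev_pow: "x \<in> carrier R \<Longrightarrow> f \<in> carrier PR \<Longrightarrow>
  eval (f [^]\<^bsub>PR\<^esub> (n::nat)) x = eval f x [^] n"
  by (rule ring_hom_ring.hom_nat_pow[OF eval_ring_hom[OF carrier_is_subring]])

lemma alg1: "u \<in> carrier R \<Longrightarrow> x \<in> carrier R \<Longrightarrow> a \<in> carrier R \<Longrightarrow> (u \<ominus> a) \<ominus> (x \<ominus> a) = u \<ominus> x"
  by (simp add: a_minus_def minus_add a_ac r_neg1 r_neg2)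

lemma alg2: "y \<in> carrier R \<Longrightarrow> z \<in> carrier R \<Longrightarrow> H \<in> carrier R \<Longrightarrow> y \<otimes> z \<ominus> y = (y \<otimes> y) \<otimes> H \<Longrightarrow>
   y \<otimes> (y \<otimes> H) = y \<otimes> (z \<ominus> \<one>)"
  by (simp add: a_minus_def r_distr r_minus m_assoc)

lemma q_ge2: "e \<ge> 1 \<Longrightarrow> p ^ e \<ge> 2"
proof -
  assume "e \<ge> 1"
  hence "p ^ 1 \<le> p ^ e" using p_gt1 by (intro power_increasing) auto
  thus ?thesis using p_gt1 by simp
qed

lemma alg_mult_le1:
  assumes e: "e \<ge> 1" and a: "a \<in> carrier R"
  shows "alg_mult (xpoly (p ^ e) \<zero>) a \<le> 1"
proof (rule ccontr)
  define q where "q = p ^ e"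
  have q2: "q \<ge> 2" using q_ge2[OF e] by (simp add: q_def)
  define P where "P = xpoly q \<zero>"
  have P: "P \<in> carrier PR" unfolding P_def by (rule xpoly_carrier) simp
  have evP: "eval P x = x [^] q \<ominus> x" if "x \<in> carrier R" for x
    using xpoly_eval[of \<zero> x q] that q2 by (simp add: P_def a_minus_def)
  assume "\<not> alg_mult (xpoly (p ^ e) \<zero>) a \<le> 1"
  hence am: "2 \<le> alg_mult P a" by (simp add: P_def q_def)
  hence "alg_mult P a > 0" by simp
  hence "is_root P a" using alg_mult_gt_zero_iff_is_root[OF P] by simp
  hence "eval P a = \<zero>" by (simp add: is_root_def)
  hence aq: "a [^] q = a" using evP[OF a] a by simp
  define lin where "lin = [\<one>, \<ominus> a]"
  have lin: "lin \<in> carrier PR"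
    unfolding lin_def using a by (simp add: univ_poly_carrier[symmetric] polynomial_def)
  have evlin: "eval lin x = x \<ominus> a" if "x \<in> carrier R" for x
    using that a by (simp add: lin_def a_minus_def)
  have "(lin [^]\<^bsub>PR\<^esub> (2::nat)) pdivides P"
    using le_alg_mult_imp_pdivides[OF a P am] by (simp add: lin_def)
  then obtain h where h: "h \<in> carrier PR" and Ph: "P = (lin [^]\<^bsub>PR\<^esub> (2::nat)) \<otimes>\<^bsub>PR\<^esub> h"
    unfolding pdivides_def factor_def by blast
  interpret PRd: domain PR by (rule PR_domain)
  define T where "T = lin \<otimes>\<^bsub>PR\<^esub> h \<oplus>\<^bsub>PR\<^esub> \<ominus>\<^bsub>PR\<^esub> (lin [^]\<^bsub>PR\<^esub> (q - 1) \<oplus>\<^bsub>PR\<^esub> \<ominus>\<^bsub>PR\<^esub> \<one>\<^bsub>PR\<^esub>)"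
  have T: "T \<in> carrier PR" unfolding T_def using lin h by simp
  have evT: "eval T x = (x \<ominus> a) \<otimes> eval h x \<ominus> ((x \<ominus> a) [^] (q - 1) \<ominus> \<one>)" if x: "x \<in> carrier R" for x
    unfolding T_def using lin h x
    by (simp add: ev_add ev_mult ev_neg ev_pow ev_one evlin a_minus_def)
  have Ta: "eval T a = \<one>"
  proof -
    have "(\<zero>::'a) [^] (q - 1) = \<zero>" using q2 by (simp add: nat_pow_zero)
    moreover have "eval h a \<in> carrier R" using h a
      by (intro eval_in_carrier) (auto simp: univ_poly_carrier[symmetric] polynomial_def)
    ultimately show ?thesis using evT[OF a] a by (simp add: a_minus_def r_neg)
  qed
  have T0: "eval T x = \<zero>" if x: "x \<in> carrier R" and xa: "x \<noteq> a" for x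
  proof -
    define y where "y = x \<ominus> a"
    have y: "y \<in> carrier R" using x a by (simp add: y_def)
    have y0: "y \<noteq> \<zero>" using x a xa r_right_minus_eq by (simp add: y_def)
    define H where "H = eval h x"
    have H: "H \<in> carrier R" unfolding H_def using h x
      by (intro eval_in_carrier) (auto simp: univ_poly_carrier[symmetric] polynomial_def)
    have "eval P x = eval (lin [^]\<^bsub>PR\<^esub> (2::nat)) x \<otimes> eval h x"
      using Ph ev_mult[OF x _ h] lin by simp
    hence "x [^] q \<ominus> x = y [^] (2::nat) \<otimes> H"
      using evP[OF x] ev_pow[OF x lin] evlin[OF x] by (simp add: H_def y_def)
    moreover have "y [^] q = x [^] q \<ominus> a"
      using frob_minus[OF x a, of e] aq by (simp add: y_def q_def)
    ultimately have "y [^] q \<ominus> y = y [^] (2::nat) \<otimes> H"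
      using alg1[of "x [^] q" x a] x a by (simp add: y_def)
    moreover have "y [^] q = y \<otimes> y [^] (q - 1)"
    proof -
      have "q = Suc (q - 1)" using q2 by simp
      hence "y [^] q = y [^] Suc (q - 1)" by simp
      also have "\<dots> = y \<otimes> y [^] (q - 1)" using y by (rule nat_pow_Suc2)
      finally show ?thesis .
    qed
    moreover have "y [^] (2::nat) = y \<otimes> y" using y by (simp add: numeral_2_eq_2)
    ultimately have "y \<otimes> (y \<otimes> H) = y \<otimes> (y [^] (q - 1) \<ominus> \<one>)"
      using alg2[of y "y [^] (q - 1)" H] y H by simp
    hence "y \<otimes> H = y [^] (q - 1) \<ominus> \<one>"
      using m_lcancel[OF y0 y] y H by simp
    thus ?thesis using evT[OF x] by (simp add: H_def y_def[symmetric] r_right_minus_eq y H)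
  qed
  have "T \<noteq> []" using Ta by auto
  hence "carrier R - {a} \<subseteq> {x. is_root T x}" using T0 by (auto simp: is_root_def)
  moreover have "finite {x. is_root T x}" by (rule finite_number_of_roots[OF T])
  ultimately have "finite (carrier R - {a})" by (rule finite_subset)
  hence "finite (insert a (carrier R - {a}))" by simp
  hence "finite (carrier R)" by (rule finite_subset[rotated]) auto
  thus False using carrier_infinite by simp
qed


definition FF :: "nat \<Rightarrow> 'a set" where
  "FF e = {x \<in> carrier R. x [^] (p ^ e) = x}"

lemma card_FF:
  assumes e: "e \<ge> 1"
  shows "finite (FF e)" "card (FF e) = p ^ e"
proof -
  define q where "q = p ^ e"
  have q2: "q \<ge> 2" using q_ge2[OF e] by (simp add: q_def)
  define P where "P = xpoly q \<zero>"
  have P: "P \<in> carrier PR" unfolding P_def by (rule xpoly_carrier) simp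
  have evP: "eval P x = x [^] q \<ominus> x" if "x \<in> carrier R" for x
    using xpoly_eval[of \<zero> x q] that q2 by (simp add: P_def a_minus_def)
  have sp: "splitted P" by (rule roots_over_carrier[OF P])
  hence sz: "size (roots P) = q" using xpoly_degree[OF q2] by (simp add: splitted_def P_def)
  have set_eq: "set_mset (roots P) = FF e"
  proof
    show "set_mset (roots P) \<subseteq> FF e"
    proof
      fix x assume "x \<in># roots P"
      hence "is_root P x" using roots_mem_iff_is_root[OF P] by simp
      hence x: "x \<in> carrier R" and "eval P x = \<zero>" by (auto simp: is_root_def)
      hence "x [^] q \<ominus> x = \<zero>" using evP by simp
      hence "x [^] q = x" using x r_right_minus_eq by simp
      thus "x \<in> FF e" using x by (simp add: FF_def q_def)
    qed
  next
    show "FF e \<subseteq> set_mset (roots P)"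
    proof
      fix x assume "x \<in> FF e"
      hence x: "x \<in> carrier R" and "x [^] q = x" by (auto simp: FF_def q_def)
      hence "eval P x = \<zero>" using evP r_right_minus_eq by simp
      hence "is_root P x" using x by (simp add: is_root_def P_def xpoly_nonempty)
      thus "x \<in># roots P" using roots_mem_iff_is_root[OF P] by simp
    qed
  qed
  show fin: "finite (FF e)" using set_eq[symmetric] by simp
  have "roots P = mset_set (FF e)"
  proof (rule multiset_eqI)
    fix x
    have c: "count (roots P) x = alg_mult P x" using alg_mult_eq_count_roots[OF P] by simp
    show "count (roots P) x = count (mset_set (FF e)) x"
    proof (cases "x \<in> FF e")
      case True
      hence "x \<in> carrier R" by (simp add: FF_def)
      hence "alg_mult P x \<le> 1" using alg_mult_le1[OF e] by (simp add: P_def q_def)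
      moreover have "count (roots P) x > 0" using True set_eq by (metis count_greater_zero_iff)
      ultimately show ?thesis using True fin c by simp
    next
      case False
      hence "count (roots P) x = 0" using set_eq by (metis count_eq_zero_iff)
      thus ?thesis using False fin by simp
    qed
  qed
  thus "card (FF e) = p ^ e" using sz by (simp add: q_def)
qed

lemma FF_carrier: "x \<in> FF e \<Longrightarrow> x \<in> carrier R" by (simp add: FF_def)

lemma FF_add: "x \<in> FF e \<Longrightarrow> y \<in> FF e \<Longrightarrow> x \<oplus> y \<in> FF e"
  by (simp add: FF_def frob_pow)

lemma FF_mult: "x \<in> FF e \<Longrightarrow> y \<in> FF e \<Longrightarrow> x \<otimes> y \<in> FF e"
  by (simp add: FF_def nat_pow_distrib)

lemma FF_neg: "x \<in> FF e \<Longrightarrow> \<ominus> x \<in> FF e"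
  by (simp add: FF_def frob_neg)

lemma FF_zero: "\<zero> \<in> FF e"
  by (simp add: FF_def)

lemma FF_iota: "iota k \<in> FF e"
  by (simp add: FF_def iota_frob_pow)

lemma FF_pow: "x \<in> FF e \<Longrightarrow> x [^] (j::nat) \<in> FF e"
proof -
  assume x: "x \<in> FF e"
  hence xc: "x \<in> carrier R" by (simp add: FF_def)
  have "(x [^] j) [^] (p ^ e) = (x [^] (p ^ e)) [^] j"
    using xc by (simp add: nat_pow_pow mult.commute)
  thus ?thesis using x xc by (simp add: FF_def)
qed

lemma FF_finsum: "finite A \<Longrightarrow> (\<And>i. i \<in> A \<Longrightarrow> f i \<in> FF e) \<Longrightarrow> finsum R f A \<in> FF e"
proof (induction A rule: finite_induct)
  case empty then show ?case by (simp add: FF_zero)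
next
  case (insert x A)
  have fc: "f \<in> insert x A \<rightarrow> carrier R" using insert.prems FF_carrier by blast
  have "finsum R f (insert x A) = f x \<oplus> finsum R f A"
    using insert fc by (intro finsum_insert) auto
  then show ?case using insert FF_add by simp
qed

end


context acf_char
begin

lemma alg3: "c \<in> carrier R \<Longrightarrow> u \<in> carrier R \<Longrightarrow> v \<in> carrier R \<Longrightarrow>
  c \<otimes> (u \<ominus> v) \<otimes> u [^] (j::nat) = c \<otimes> u [^] (Suc j) \<oplus> (\<ominus> v) \<otimes> (c \<otimes> u [^] j)"
  by (simp add: a_minus_def r_distr l_distr l_minus r_minus m_ac nat_pow_Suc2)

lemma vandermonde_nz:
  assumes "finite S" "S \<noteq> {}" "inj_on b S"
    and "\<And>i. i \<in> S \<Longrightarrow> b i \<in> carrier R - {\<zero>}"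
    and "\<And>i. i \<in> S \<Longrightarrow> c i \<in> carrier R - {\<zero>}"
  shows "\<exists>j \<in> {1..card S}. (\<Oplus>i\<in>S. c i \<otimes> b i [^] j) \<noteq> \<zero>"
  using assms
proof (induction S arbitrary: c rule: finite_ne_induct)
  case (singleton k)
  have "c k \<otimes> b k [^] (1::nat) \<noteq> \<zero>"
    using singleton.prems by (simp add: integral_iff)
  thus ?case using singleton.prems by auto
next
  case (insert k S)
  have bk: "b k \<in> carrier R" using insert.prems by auto
  have bS: "b i \<in> carrier R" "c i \<in> carrier R" if "i \<in> insert k S" for i
    using insert.prems that by auto
  show ?case
  proof (rule ccontr)
    assume "\<not> ?case"
    hence s0: "(\<Oplus>i\<in>insert k S. c i \<otimes> b i [^] j) = \<zero>" if "j \<in> {1..card S + 1}" for j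
      using that insert.hyps by auto
    define c' where "c' = (\<lambda>i. c i \<otimes> (b i \<ominus> b k))"
    have c': "c' i \<in> carrier R - {\<zero>}" if i: "i \<in> S" for i
    proof -
      have "i \<noteq> k" using i insert.hyps by auto
      hence "b i \<noteq> b k" using insert.prems(1) i by (auto simp: inj_on_def)
      hence "b i \<ominus> b k \<noteq> \<zero>" using bS[of i] bk i r_right_minus_eq by auto
      thus ?thesis using insert.prems i bk by (auto simp: c'_def integral_iff)
    qed
    have inj: "inj_on b S" using insert.prems(1) by (auto simp: inj_on_def)
    obtain j where j: "j \<in> {1..card S}" and nz: "(\<Oplus>i\<in>S. c' i \<otimes> b i [^] j) \<noteq> \<zero>"
      using insert.IH[of c'] inj insert.prems c' by auto
    define g where "g = (\<lambda>i. c i \<otimes> b i [^] (Suc j) \<oplus> (\<ominus> b k) \<otimes> (c i \<otimes> b i [^] j))"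
    have g: "g \<in> insert k S \<rightarrow> carrier R" using bS bk by (auto simp: g_def)
    have "(\<Oplus>i\<in>S. c' i \<otimes> b i [^] j) = (\<Oplus>i\<in>S. g i)"
      using bS bk by (intro finsum_cong') (auto simp: c'_def g_def alg3)
    also have "\<dots> = g k \<oplus> (\<Oplus>i\<in>S. g i)"
    proof -
      have "g k = c k \<otimes> (b k \<ominus> b k) \<otimes> b k [^] j"
        unfolding g_def by (rule alg3[symmetric]) (use bS bk in auto)
      also have "b k \<ominus> b k = \<zero>" using bk by (simp add: r_neg a_minus_def)
      finally have "g k = \<zero>" using bS bk by simp
      moreover have "(\<Oplus>i\<in>S. g i) \<in> carrier R" using g by (intro finsum_closed) auto
      ultimately show ?thesis by simp
    qed
    also have "\<dots> = (\<Oplus>i\<in>insert k S. g i)"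
      using g insert.hyps by (intro finsum_insert[symmetric]) auto
    also have "\<dots> = (\<Oplus>i\<in>insert k S. c i \<otimes> b i [^] (Suc j)) \<oplus> (\<ominus> b k) \<otimes> (\<Oplus>i\<in>insert k S. c i \<otimes> b i [^] j)"
    proof -
      have "(\<Oplus>i\<in>insert k S. g i) = (\<Oplus>i\<in>insert k S. c i \<otimes> b i [^] (Suc j)) \<oplus> (\<Oplus>i\<in>insert k S. (\<ominus> b k) \<otimes> (c i \<otimes> b i [^] j))"
        unfolding g_def by (rule finsum_addf) (use bS bk in auto)
      moreover have "(\<Oplus>i\<in>insert k S. (\<ominus> b k) \<otimes> (c i \<otimes> b i [^] j)) = (\<ominus> b k) \<otimes> (\<Oplus>i\<in>insert k S. c i \<otimes> b i [^] j)"
        by (rule finsum_rdistr[symmetric]) (use bS bk insert.hyps in auto)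
      ultimately show ?thesis by simp
    qed
    also have "\<dots> = \<zero>"
      using s0[of j] s0[of "Suc j"] j bk by simp
    finally show False using nz by simp
  qed
qed


definition phi :: "(nat \<Rightarrow> 'a) \<Rightarrow> nat \<Rightarrow> nat \<Rightarrow> (nat \<Rightarrow> int) \<Rightarrow> 'a" where
  "phi b n j x = (\<Oplus>i\<in>{..<n}. iota (x i) \<otimes> b i [^] j)"

lemma phi_carrier: "(\<And>i. i < n \<Longrightarrow> b i \<in> carrier R) \<Longrightarrow> phi b n j x \<in> carrier R"
  unfolding phi_def by (intro finsum_closed) auto

lemma phi_add:
  assumes "\<And>i. i < n \<Longrightarrow> b i \<in> carrier R"
  shows "phi b n j (x + y) = phi b n j x \<oplus> phi b n j y"
proof -
  have "phi b n j (x + y) = (\<Oplus>i\<in>{..<n}. iota (x i) \<otimes> b i [^] j \<oplus> iota (y i) \<otimes> b i [^] j)"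
    unfolding phi_def using assms by (intro finsum_cong') (auto simp: iota_add l_distr)
  also have "\<dots> = phi b n j x \<oplus> phi b n j y"
    unfolding phi_def using assms by (intro finsum_addf) auto
  finally show ?thesis .
qed

lemma phi_smult:
  assumes "\<And>i. i < n \<Longrightarrow> b i \<in> carrier R"
  shows "phi b n j (\<lambda>i. c * x i) = iota c \<otimes> phi b n j x"
proof -
  have "phi b n j (\<lambda>i. c * x i) = (\<Oplus>i\<in>{..<n}. iota c \<otimes> (iota (x i) \<otimes> b i [^] j))"
    unfolding phi_def using assms by (intro finsum_cong') (auto simp: iota_mult m_assoc)
  also have "\<dots> = iota c \<otimes> phi b n j x"
    unfolding phi_def using assms by (intro finsum_rdistr[symmetric]) auto
  finally show ?thesis .
qed

lemma phi_neg:
  assumes "\<And>i. i < n \<Longrightarrow> b i \<in> carrier R"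
  shows "phi b n j (- x) = \<ominus> phi b n j x"
proof -
  have "phi b n j (- x) = phi b n j (\<lambda>i. (-1) * x i)" by (simp add: fun_Compl_def)
  also have "\<dots> = iota (-1) \<otimes> phi b n j x" by (rule phi_smult[OF assms])
  also have "\<dots> = \<ominus> phi b n j x" using phi_carrier[OF assms] by (simp add: iota_neg l_minus)
  finally show ?thesis .
qed

lemma phi_diff:
  assumes "\<And>i. i < n \<Longrightarrow> b i \<in> carrier R"
  shows "phi b n j (x - y) = phi b n j x \<ominus> phi b n j y"
proof -
  have "x - y = x + (- y)" for x y :: "nat \<Rightarrow> int" by simp
  thus ?thesis using phi_add[OF assms, where j=j and x=x and y="- y"] phi_neg[OF assms, where j=j and x=y] by (simp add: a_minus_def)
qed

lemma phi_FF:
  assumes "\<And>i. i < n \<Longrightarrow> b i \<in> FF e"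
  shows "phi b n j x \<in> FF e"
  unfolding phi_def using assms by (intro FF_finsum) (auto intro: FF_mult FF_iota FF_pow)

lemma phi_frob:
  assumes "\<And>i. i < n \<Longrightarrow> b i \<in> carrier R"
  shows "phi b n (p * j) x = phi b n j x [^] p"
proof -
  have "phi b n j x [^] (p ^ 1) = (\<Oplus>i\<in>{..<n}. (iota (x i) \<otimes> b i [^] j) [^] (p ^ 1))"
    unfolding phi_def using assms by (intro frob_sum) auto
  also have "\<dots> = phi b n (p * j) x"
    unfolding phi_def using assms
    by (intro finsum_cong') (auto simp: nat_pow_distrib iota_frob nat_pow_pow mult.commute)
  finally show ?thesis by simp
qed

lemma phi_nz:
  assumes b: "inj_on b {..<n}" "\<And>i. i < n \<Longrightarrow> b i \<in> carrier R - {\<zero>}"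
    and d: "\<And>i. i < n \<Longrightarrow> \<bar>d i\<bar> < int p" "\<exists>i<n. d i \<noteq> 0"
  shows "\<exists>j \<in> {1..hwt n d}. phi b n j d \<noteq> \<zero>"
proof -
  define S where "S = {i. i < n \<and> d i \<noteq> 0}"
  have fS: "finite S" by (simp add: S_def)
  have S0: "S \<noteq> {}" using d(2) by (auto simp: S_def)
  have cS: "card S = hwt n d" by (simp add: S_def hwt_def)
  have nz: "iota (d i) \<in> carrier R - {\<zero>}" if "i \<in> S" for i
  proof -
    have "i < n" "d i \<noteq> 0" using that by (auto simp: S_def)
    hence "\<not> int p dvd d i" using d(1)[of i] dvd_imp_le_int[of "d i" "int p"] by auto
    thus ?thesis using iota_zero_iff by simp
  qed
  obtain j where j: "j \<in> {1..card S}" and jnz: "(\<Oplus>i\<in>S. iota (d i) \<otimes> b i [^] j) \<noteq> \<zero>"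
    using vandermonde_nz[OF fS S0, of b "\<lambda>i. iota (d i)"] b nz
    by (auto simp: S_def inj_on_def)
  have "phi b n j d = (\<Oplus>i\<in>S. iota (d i) \<otimes> b i [^] j)"
  proof -
    have U: "{..<n} = S \<union> ({..<n} - S)" by (auto simp: S_def)
    have f: "(\<lambda>i. iota (d i) \<otimes> b i [^] j) \<in> A \<rightarrow> carrier R" if "A \<subseteq> {..<n}" for A
      using b that by auto
    have "phi b n j d = (\<Oplus>i\<in>S. iota (d i) \<otimes> b i [^] j) \<oplus> (\<Oplus>i\<in>{..<n} - S. iota (d i) \<otimes> b i [^] j)"
      unfolding phi_def by (subst U, rule finsum_Un_disjoint) (use fS f in \<open>auto simp: S_def\<close>)
    also have "(\<Oplus>i\<in>{..<n} - S. iota (d i) \<otimes> b i [^] j) = (\<Oplus>i\<in>{..<n} - S. \<zero>)"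
      using b by (intro finsum_cong') (auto simp: S_def)
    also have "\<dots> = \<zero>" by (rule finsum_zero)
    moreover have "(\<Oplus>i\<in>S. iota (d i) \<otimes> b i [^] j) \<in> carrier R"
      using f[of S] by (intro finsum_closed) (auto simp: S_def)
    ultimately show ?thesis by simp
  qed
  thus ?thesis using j jnz cS by (intro bexI[of _ j]) auto
qed

lemma phi_J:
  assumes b: "\<And>i. i < n \<Longrightarrow> b i \<in> carrier R"
  shows "j \<ge> 1 \<Longrightarrow> j \<le> N \<Longrightarrow> phi b n j d \<noteq> \<zero> \<Longrightarrow> \<exists>j' \<in> {j\<in>{1..N}. \<not> p dvd j}. phi b n j' d \<noteq> \<zero>"
proof (induction j rule: less_induct)
  case (less j)
  show ?case
  proof (cases "p dvd j")
    case False
    then show ?thesis using less.prems by auto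
  next
    case True
    then obtain j' where j': "j = p * j'" by blast
    have "j' \<ge> 1" using j' less.prems(1) by (cases j') auto
    moreover have "j' < j" using j' p_gt1 \<open>j' \<ge> 1\<close> by simp
    moreover have "phi b n j' d \<noteq> \<zero>"
      using less.prems(3) phi_frob[OF b, where j=j' and x=d] j' by auto
    ultimately show ?thesis using less.IH[of j'] less.prems(2) by auto
  qed
qed

end


lemma Zn_add: "x \<in> Zn n \<Longrightarrow> y \<in> Zn n \<Longrightarrow> x + y \<in> Zn n" by (simp add: Zn_def)
lemma Zn_neg: "x \<in> Zn n \<Longrightarrow> - x \<in> Zn n" by (simp add: Zn_def)
lemma Zn_diff: "x \<in> Zn n \<Longrightarrow> y \<in> Zn n \<Longrightarrow> x - y \<in> Zn n" by (simp add: Zn_def)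
lemma Zn_zero: "0 \<in> Zn n" by (simp add: Zn_def)

definition homlike :: "nat \<Rightarrow> ((nat \<Rightarrow> int) \<Rightarrow> 'g) \<Rightarrow> bool" where
  "homlike n f \<longleftrightarrow> (\<forall>x\<in>Zn n. \<forall>y\<in>Zn n. f x = f y \<longleftrightarrow> f (x - y) = f 0)"

definition kerL :: "nat \<Rightarrow> ((nat \<Rightarrow> int) \<Rightarrow> 'g) \<Rightarrow> (nat \<Rightarrow> int) set" where
  "kerL n f = {x \<in> Zn n. f x = f 0}"

lemma coset_eq:
  assumes h: "homlike n f" and x: "x \<in> Zn n"
  shows "(\<lambda>y. x + y) ` kerL n f = {y \<in> Zn n. f y = f x}"
proof
  show "(\<lambda>y. x + y) ` kerL n f \<subseteq> {y \<in> Zn n. f y = f x}"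
  proof
    fix z assume "z \<in> (\<lambda>y. x + y) ` kerL n f"
    then obtain l where l: "l \<in> Zn n" "f l = f 0" and z: "z = x + l" by (auto simp: kerL_def)
    have zZ: "z \<in> Zn n" using z l x Zn_add by blast
    have "z - x = l" using z by simp
    hence "f z = f x" using h zZ x l unfolding homlike_def by metis
    thus "z \<in> {y \<in> Zn n. f y = f x}" using zZ by simp
  qed
next
  show "{y \<in> Zn n. f y = f x} \<subseteq> (\<lambda>y. x + y) ` kerL n f"
  proof
    fix y assume y: "y \<in> {y \<in> Zn n. f y = f x}"
    hence yZ: "y \<in> Zn n" and "f y = f x" by auto
    hence "f (y - x) = f 0" using h x unfolding homlike_def by blast
    moreover have "y - x \<in> Zn n" using yZ x Zn_diff by blast
    ultimately have "y - x \<in> kerL n f" by (simp add: kerL_def)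
    moreover have "y = x + (y - x)" by simp
    ultimately show "y \<in> (\<lambda>y. x + y) ` kerL n f" by blast
  qed
qed

lemma card_cosets:
  assumes h: "homlike n f"
  shows "card (cosets n (kerL n f)) = card (f ` Zn n)"
proof -
  define fib where "fib u = {y \<in> Zn n. f y = u}" for u
  have "cosets n (kerL n f) = fib ` (f ` Zn n)"
    unfolding cosets_def fib_def using coset_eq[OF h] by (auto simp: image_image)
  moreover have "inj_on fib (f ` Zn n)"
  proof (rule inj_onI)
    fix u v assume u: "u \<in> f ` Zn n" and v: "v \<in> f ` Zn n" and e: "fib u = fib v"
    obtain x where x: "x \<in> Zn n" "u = f x" using u by auto
    have "x \<in> fib u" using x by (simp add: fib_def)
    hence "x \<in> fib v" using e by simp
    thus "u = v" using x by (simp add: fib_def)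
  qed
  ultimately show ?thesis by (simp add: card_image)
qed

lemma lattice_ker:
  assumes h: "homlike n f"
  shows "is_lattice n (kerL n f)"
  unfolding is_lattice_def
proof (intro conjI ballI)
  show "kerL n f \<subseteq> Zn n" by (auto simp: kerL_def)
  show "0 \<in> kerL n f" by (simp add: kerL_def Zn_zero)
next
  fix x y assume x: "x \<in> kerL n f" and y: "y \<in> kerL n f"
  have xZ: "x \<in> Zn n" and yZ: "y \<in> Zn n" and fx: "f x = f 0" and fy: "f y = f 0"
    using x y by (auto simp: kerL_def)
  have sZ: "x + y \<in> Zn n" using xZ yZ Zn_add by blast
  have "f (x + y - y) = f 0" using fx by simp
  hence "f (x + y) = f y" using h sZ yZ unfolding homlike_def by blast
  thus "x + y \<in> kerL n f" using sZ fy by (simp add: kerL_def)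
next
  fix x assume x: "x \<in> kerL n f"
  have xZ: "x \<in> Zn n" and fx: "f x = f 0" using x by (auto simp: kerL_def)
  have "f (0 - x) = f 0" using h xZ Zn_zero fx unfolding homlike_def by metis
  thus "- x \<in> kerL n f" using Zn_neg[OF xZ] by (simp add: kerL_def)
qed

lemma homlike_pair:
  assumes h: "homlike n f"
  shows "homlike n (\<lambda>x. (f x, x 0 mod (M::int)))"
  unfolding homlike_def
proof (intro ballI)
  fix x y assume x: "x \<in> Zn n" and y: "y \<in> Zn n"
  have "f x = f y \<longleftrightarrow> f (x - y) = f 0" using h x y by (simp add: homlike_def)
  moreover have "x 0 mod M = y 0 mod M \<longleftrightarrow> (x 0 - y 0) mod M = 0 mod M"
    by (simp add: mod_eq_dvd_iff dvd_eq_mod_eq_0)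
  ultimately show "((f x, x 0 mod M) = (f y, y 0 mod M)) = ((f (x - y), (x - y) 0 mod M) = (f 0, 0 0 mod M))"
    by auto
qed

lemma ker_pair: "kerL n (\<lambda>x. (f x, x 0 mod (M::int))) \<subseteq> kerL n f"
  by (auto simp: kerL_def)

lemma card_pair:
  assumes h: "homlike n f" and fin: "finite (f ` Zn n)" and M: "M > (0::int)"
  shows "card ((\<lambda>x. (f x, x 0 mod M)) ` Zn n) = card (f ` Zn n) * card ((\<lambda>x. x 0 mod M) ` kerL n f)"
proof -
  define g where "g = (\<lambda>x::nat \<Rightarrow> int. x 0 mod M)"
  define G where "G = g ` kerL n f"
  have Gsub: "G \<subseteq> {0..<M}" using M by (auto simp: G_def g_def)
  hence finG: "finite G" by (rule finite_subset) simp
  have img: "(\<lambda>x. (f x, g x)) ` Zn n = Sigma (f ` Zn n) (\<lambda>u. g ` {y \<in> Zn n. f y = u})"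
  proof
    show "(\<lambda>x. (f x, g x)) ` Zn n \<subseteq> Sigma (f ` Zn n) (\<lambda>u. g ` {y \<in> Zn n. f y = u})" by auto
    show "Sigma (f ` Zn n) (\<lambda>u. g ` {y \<in> Zn n. f y = u}) \<subseteq> (\<lambda>x. (f x, g x)) ` Zn n"
    proof
      fix z assume "z \<in> Sigma (f ` Zn n) (\<lambda>u. g ` {y \<in> Zn n. f y = u})"
      then obtain u y where "z = (u, g y)" "y \<in> Zn n" "f y = u" by auto
      thus "z \<in> (\<lambda>x. (f x, g x)) ` Zn n" by auto
    qed
  qed
  have fib: "card (g ` {y \<in> Zn n. f y = u}) = card G" if u: "u \<in> f ` Zn n" for u
  proof -
    obtain x where x: "x \<in> Zn n" "u = f x" using u by auto
    have "g ` {y \<in> Zn n. f y = u} = g ` ((\<lambda>y. x + y) ` kerL n f)"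
      using coset_eq[OF h x(1)] x by simp
    also have "\<dots> = (\<lambda>s. (x 0 + s) mod M) ` G"
      by (auto simp: G_def g_def image_image mod_add_right_eq)
    finally have e: "g ` {y \<in> Zn n. f y = u} = (\<lambda>s. (x 0 + s) mod M) ` G" .
    have "inj_on (\<lambda>s. (x 0 + s) mod M) G"
    proof (rule inj_onI)
      fix s s' assume s: "s \<in> G" and s': "s' \<in> G" and eq: "(x 0 + s) mod M = (x 0 + s') mod M"
      hence "s mod M = s' mod M" by (simp add: mod_eq_dvd_iff)
      moreover have "s mod M = s" "s' mod M = s'" using s s' Gsub by auto
      ultimately show "s = s'" by simp
    qed
    thus ?thesis using e by (simp add: card_image)
  qed
  have "card ((\<lambda>x. (f x, g x)) ` Zn n) = (\<Sum>u\<in>f ` Zn n. card (g ` {y \<in> Zn n. f y = u}))"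
    unfolding img
  proof (rule card_SigmaI)
    show "finite (f ` Zn n)" by (rule fin)
    show "\<forall>u\<in>f ` Zn n. finite (g ` {y \<in> Zn n. f y = u})"
    proof
      fix u show "finite (g ` {y \<in> Zn n. f y = u})"
        by (rule finite_subset[of _ "{0..<M}"]) (use M in \<open>auto simp: g_def\<close>)
    qed
  qed
  also have "\<dots> = (\<Sum>u\<in>f ` Zn n. card G)" using fib by simp
  also have "\<dots> = card (f ` Zn n) * card G" by simp
  finally show ?thesis by (simp add: g_def G_def)
qed


lemma nat_int_pow: "nat (int p ^ a) = p ^ a"
  by (metis nat_int of_nat_power)

lemma card_mod_image:
  fixes L :: "(nat \<Rightarrow> int) set" and p :: nat
  assumes pp: "Factorial_Ring.prime p"
    and add: "\<And>x y. x \<in> L \<Longrightarrow> y \<in> L \<Longrightarrow> x + y \<in> L"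
    and smul: "\<And>x c. x \<in> L \<Longrightarrow> (\<lambda>i. c * x i) \<in> L"
    and e0: "(\<lambda>i. if i = 0 then int p else 0) \<in> L"
    and M: "M = int p ^ a * (if \<exists>x\<in>L. \<not> int p dvd x 0 then 1 else int p)"
  shows "card ((\<lambda>x. x 0 mod M) ` L) = p ^ a"
proof -
  have p1: "int p > 1" using pp prime_gt_1_nat by auto
  define e where "e = (\<lambda>i::nat. if i = 0 then int p else 0)"
  show ?thesis
  proof (cases "\<exists>x\<in>L. \<not> int p dvd x 0")
    case True
    then obtain x where x: "x \<in> L" "\<not> int p dvd x 0" by blast
    have Meq: "M = int p ^ a" using M True by simp
    have Mpos: "M > 0" using Meq p1 by simp
    have "coprime (int p) (x 0)" using x(2) pp by (intro prime_imp_coprime_int) (auto simp: prime_nat_int_transfer)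
    hence g1: "gcd (x 0) (int p) = 1" by (simp add: coprime_iff_gcd_eq_1 gcd.commute)
    obtain u v where uv: "u * x 0 + v * int p = 1" using bezout_int[of "x 0" "int p"] g1 by auto
    have "(\<lambda>x. x 0 mod M) ` L = {0..<M}"
    proof
      show "(\<lambda>x. x 0 mod M) ` L \<subseteq> {0..<M}" using Mpos by auto
      show "{0..<M} \<subseteq> (\<lambda>x. x 0 mod M) ` L"
      proof
        fix k assume k: "k \<in> {0..<M}"
        define y where "y = (\<lambda>i. (u * k) * x i) + (\<lambda>i. (v * k) * e i)"
        have "y \<in> L" unfolding y_def using add smul x(1) e0 by (simp add: e_def)
        moreover have "y 0 = k" unfolding y_def e_def
          by (simp add: algebra_simps) (metis uv mult.commute mult.left_commute distrib_left mult_1_right)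
        ultimately show "k \<in> (\<lambda>x. x 0 mod M) ` L" using k by (intro image_eqI[of _ _ y]) auto
      qed
    qed
    thus ?thesis using Meq by (simp add: nat_power_eq of_nat_power[symmetric] del: of_nat_power)
  next
    case False
    hence dv: "\<And>x. x \<in> L \<Longrightarrow> int p dvd x 0" by blast
    have Meq: "M = int p * int p ^ a" using M False by simp
    have pa: "int p ^ a > 0" using p1 by simp
    have "(\<lambda>x. x 0 mod M) ` L = (\<lambda>c. int p * c) ` {0..<int p ^ a}"
    proof
      show "(\<lambda>x. x 0 mod M) ` L \<subseteq> (\<lambda>c. int p * c) ` {0..<int p ^ a}"
      proof
        fix z assume "z \<in> (\<lambda>x. x 0 mod M) ` L"
        then obtain x where x: "x \<in> L" "z = x 0 mod M" by auto
        obtain c where c: "x 0 = int p * c" using dv[OF x(1)] by blast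
        have "z = int p * (c mod int p ^ a)" using x(2) c Meq by (simp add: mod_mult_mult1)
        moreover have "c mod int p ^ a \<in> {0..<int p ^ a}" using pa by simp
        ultimately show "z \<in> (\<lambda>c. int p * c) ` {0..<int p ^ a}" by blast
      qed
      show "(\<lambda>c. int p * c) ` {0..<int p ^ a} \<subseteq> (\<lambda>x. x 0 mod M) ` L"
      proof
        fix z assume "z \<in> (\<lambda>c. int p * c) ` {0..<int p ^ a}"
        then obtain c where c: "c \<in> {0..<int p ^ a}" "z = int p * c" by auto
        define y where "y = (\<lambda>i. c * e i)"
        have "y \<in> L" unfolding y_def using smul e0 by (simp add: e_def)
        moreover have "y 0 mod M = z"
        proof -
          have "y 0 = int p * c" by (simp add: y_def e_def)
          moreover have "0 \<le> int p * c" "int p * c < M" using c p1 Meq by auto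
          ultimately show ?thesis using c by simp
        qed
        ultimately show "z \<in> (\<lambda>x. x 0 mod M) ` L" by (intro image_eqI[of _ _ y]) auto
      qed
    qed
    moreover have "inj_on (\<lambda>c. int p * c) {0..<int p ^ a}" using p1 by (intro inj_onI) auto
    ultimately show ?thesis by (simp add: card_image nat_int_pow)
  qed
qed


context acf_char
begin

definition GG :: "nat set \<Rightarrow> nat \<Rightarrow> (nat \<Rightarrow> 'a) monoid" where
  "GG J e = \<lparr>carrier = PiE J (\<lambda>_. FF e), monoid.mult = (\<lambda>f g. \<lambda>j\<in>J. f j \<oplus> g j), one = (\<lambda>j\<in>J. \<zero>)\<rparr>"

lemma GG_group: "group (GG J e)"
proof (rule groupI)
  fix x y assume x: "x \<in> carrier (GG J e)" and y: "y \<in> carrier (GG J e)"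
  hence x': "x \<in> PiE J (\<lambda>_. FF e)" and y': "y \<in> PiE J (\<lambda>_. FF e)" by (simp_all add: GG_def)
  have "x j \<oplus> y j \<in> FF e" if "j \<in> J" for j by (rule FF_add[OF PiE_mem[OF x' that] PiE_mem[OF y' that]])
  hence "(\<lambda>j\<in>J. x j \<oplus> y j) \<in> PiE J (\<lambda>_. FF e)" by (simp add: restrict_PiE_iff)
  thus "x \<otimes>\<^bsub>GG J e\<^esub> y \<in> carrier (GG J e)" by (simp add: GG_def)
next
  show "\<one>\<^bsub>GG J e\<^esub> \<in> carrier (GG J e)" by (auto simp: GG_def FF_zero)
next
  fix x y z assume x: "x \<in> carrier (GG J e)" and y: "y \<in> carrier (GG J e)" and z: "z \<in> carrier (GG J e)"
  show "x \<otimes>\<^bsub>GG J e\<^esub> y \<otimes>\<^bsub>GG J e\<^esub> z = x \<otimes>\<^bsub>GG J e\<^esub> (y \<otimes>\<^bsub>GG J e\<^esub> z)"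
  proof -
    have "\<And>j. j \<in> J \<Longrightarrow> x j \<oplus> y j \<oplus> z j = x j \<oplus> (y j \<oplus> z j)"
    proof -
      fix j assume j: "j \<in> J"
      have x': "x \<in> PiE J (\<lambda>_. FF e)" "y \<in> PiE J (\<lambda>_. FF e)" "z \<in> PiE J (\<lambda>_. FF e)"
        using x y z by (simp_all add: GG_def)
      have "x j \<in> carrier R" "y j \<in> carrier R" "z j \<in> carrier R"
        using FF_carrier[OF PiE_mem[OF x'(1) j]] FF_carrier[OF PiE_mem[OF x'(2) j]] FF_carrier[OF PiE_mem[OF x'(3) j]] .
      thus "x j \<oplus> y j \<oplus> z j = x j \<oplus> (y j \<oplus> z j)" by (rule a_assoc)
    qed
    show ?thesis
    proof (rule ext)
      fix j show "(x \<otimes>\<^bsub>GG J e\<^esub> y \<otimes>\<^bsub>GG J e\<^esub> z) j = (x \<otimes>\<^bsub>GG J e\<^esub> (y \<otimes>\<^bsub>GG J e\<^esub> z)) j"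
        using \<open>\<And>j. j \<in> J \<Longrightarrow> x j \<oplus> y j \<oplus> z j = x j \<oplus> (y j \<oplus> z j)\<close>[of j]
        by (cases "j \<in> J") (simp_all add: GG_def)
    qed
  qed
next
  fix x assume x: "x \<in> carrier (GG J e)"
  show "\<one>\<^bsub>GG J e\<^esub> \<otimes>\<^bsub>GG J e\<^esub> x = x"
  proof (rule ext)
    fix j show "(\<one>\<^bsub>GG J e\<^esub> \<otimes>\<^bsub>GG J e\<^esub> x) j = x j"
    proof (cases "j \<in> J")
      case True
      have x': "x \<in> PiE J (\<lambda>_. FF e)" using x by (simp add: GG_def)
      have "x j \<in> carrier R" using PiE_mem[OF x' True] by (rule FF_carrier)
      thus ?thesis using True by (simp add: GG_def)
    next
      case False
      have x': "x \<in> PiE J (\<lambda>_. FF e)" using x by (simp add: GG_def)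
      thus ?thesis using False PiE_arb[OF x' False] by (simp add: GG_def)
    qed
  qed
next
  fix x assume x: "x \<in> carrier (GG J e)"
  define y where "y = (\<lambda>j\<in>J. \<ominus> x j)"
  have x': "x \<in> PiE J (\<lambda>_. FF e)" using x by (simp add: GG_def)
  have "\<ominus> x j \<in> FF e" if "j \<in> J" for j using FF_neg[OF PiE_mem[OF x' that]] .
  hence "y \<in> carrier (GG J e)" by (simp add: GG_def y_def restrict_PiE_iff)
  moreover have "y \<otimes>\<^bsub>GG J e\<^esub> x = \<one>\<^bsub>GG J e\<^esub>"
  proof (rule ext)
    fix j show "(y \<otimes>\<^bsub>GG J e\<^esub> x) j = \<one>\<^bsub>GG J e\<^esub> j"
    proof (cases "j \<in> J")
      case True
      hence "x j \<in> carrier R" using PiE_mem[OF x'] FF_carrier by blast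
      thus ?thesis using True by (simp add: GG_def y_def l_neg)
    qed (simp add: GG_def)
  qed
  ultimately show "\<exists>y\<in>carrier (GG J e). y \<otimes>\<^bsub>GG J e\<^esub> x = \<one>\<^bsub>GG J e\<^esub>" by blast
qed

lemma phi_zero_vec: "(\<And>i. i < n \<Longrightarrow> b i \<in> carrier R) \<Longrightarrow> phi b n j 0 = \<zero>"
proof -
  assume b: "\<And>i. i < n \<Longrightarrow> b i \<in> carrier R"
  have "phi b n j 0 = (\<Oplus>i\<in>{..<n}. \<zero>)"
    unfolding phi_def using b by (intro finsum_cong') auto
  thus ?thesis by (simp add: finsum_zero)
qed

lemma phi_pdvd:
  assumes "\<And>i. int p dvd x i" "\<And>i. i < n \<Longrightarrow> b i \<in> carrier R"
  shows "phi b n j x = \<zero>"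
proof -
  have "phi b n j x = (\<Oplus>i\<in>{..<n}. \<zero>)"
    unfolding phi_def
  proof (intro finsum_cong')
    fix i assume i: "i \<in> {..<n}"
    have "iota (x i) = \<zero>" using iota_zero_iff assms(1) by blast
    thus "iota (x i) \<otimes> b i [^] j = \<zero>" using assms(2) i by simp
  qed auto
  thus ?thesis by (simp add: finsum_zero)
qed

definition th0 :: "(nat \<Rightarrow> 'a) \<Rightarrow> nat \<Rightarrow> nat set \<Rightarrow> (nat \<Rightarrow> int) \<Rightarrow> nat \<Rightarrow> 'a" where
  "th0 b n J x = (\<lambda>j\<in>J. phi b n j x)"

lemma th0_homlike:
  assumes b: "\<And>i. i < n \<Longrightarrow> b i \<in> carrier R"
  shows "homlike n (th0 b n J)"
  unfolding homlike_def
proof (intro ballI)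
  fix x y :: "nat \<Rightarrow> int"
  have "(\<forall>j\<in>J. phi b n j x = phi b n j y) \<longleftrightarrow> (\<forall>j\<in>J. phi b n j (x - y) = phi b n j 0)"
    using b by (simp add: phi_diff phi_zero_vec r_right_minus_eq phi_carrier)
  thus "(th0 b n J x = th0 b n J y) = (th0 b n J (x - y) = th0 b n J 0)"
    unfolding th0_def by (auto simp: restrict_def fun_eq_iff)
qed

lemma th0_card_dvd:
  assumes b: "\<And>i. i < n \<Longrightarrow> b i \<in> FF e" and J: "finite J"
  shows "card (th0 b n J ` Zn n) dvd (card (FF e)) ^ card J"
proof -
  have bc: "\<And>i. i < n \<Longrightarrow> b i \<in> carrier R" using b FF_carrier by blast
  interpret G: group "GG J e" by (rule GG_group)
  let ?H = "th0 b n J ` Zn n"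
  have mult: "th0 b n J x \<otimes>\<^bsub>GG J e\<^esub> th0 b n J y = th0 b n J (x + y)" for x y
    using bc by (auto simp: GG_def th0_def restrict_def fun_eq_iff phi_add)
  have sub: "?H \<subseteq> carrier (GG J e)"
    using b by (auto simp: GG_def th0_def phi_FF)
  have "subgroup ?H (GG J e)"
  proof (rule G.subgroupI)
    show "?H \<subseteq> carrier (GG J e)" by (rule sub)
    show "?H \<noteq> {}" using Zn_zero by blast
  next
    fix a assume "a \<in> ?H"
    then obtain x where x: "x \<in> Zn n" "a = th0 b n J x" by auto
    have "th0 b n J (- x) \<otimes>\<^bsub>GG J e\<^esub> a = \<one>\<^bsub>GG J e\<^esub>"
      using x bc by (auto simp: GG_def th0_def restrict_def fun_eq_iff phi_neg l_neg phi_carrier)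
    moreover have "th0 b n J (- x) \<in> carrier (GG J e)" using sub Zn_neg[OF x(1)] by blast
    moreover have "a \<in> carrier (GG J e)" using sub x by blast
    ultimately have "inv\<^bsub>GG J e\<^esub> a = th0 b n J (- x)" by (intro G.inv_equality)
    thus "inv\<^bsub>GG J e\<^esub> a \<in> ?H" using Zn_neg[OF x(1)] by auto
  next
    fix a c assume "a \<in> ?H" "c \<in> ?H"
    then obtain x y where "x \<in> Zn n" "y \<in> Zn n" "a = th0 b n J x" "c = th0 b n J y" by auto
    thus "a \<otimes>\<^bsub>GG J e\<^esub> c \<in> ?H" using mult Zn_add by auto
  qed
  hence "card (rcosets\<^bsub>GG J e\<^esub> ?H) * card ?H = order (GG J e)" by (rule G.lagrange)
  hence "card ?H dvd order (GG J e)" by (metis dvd_triv_right)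
  moreover have "order (GG J e) = card (FF e) ^ card J"
    by (simp add: order_def GG_def card_PiE J)
  ultimately show ?thesis by simp
qed

end


definition supp :: "nat \<Rightarrow> (nat \<Rightarrow> int) \<Rightarrow> nat set" where
  "supp n x = {i. i < n \<and> x i \<noteq> 0}"

lemma card_piece:
  fixes V :: "int set"
  assumes fin: "finite S" and V0: "0 \<notin> V"
  shows "card {x. (\<forall>i\<in>S. x i \<in> V) \<and> (\<forall>i. i \<notin> S \<longrightarrow> x i = 0)} = card V ^ card S"
proof -
  let ?A = "{x. (\<forall>i\<in>S. x i \<in> V) \<and> (\<forall>i. i \<notin> S \<longrightarrow> x i = 0)}"
  have "bij_betw (\<lambda>x. restrict x S) ?A (PiE S (\<lambda>_. V))"
  proof (rule bij_betw_byWitness[of _ "\<lambda>f i. if i \<in> S then f i else 0"])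
    show "(\<lambda>x. restrict x S) ` ?A \<subseteq> PiE S (\<lambda>_. V)"
    proof
      fix z assume "z \<in> (\<lambda>x. restrict x S) ` ?A"
      then obtain x where x: "x \<in> ?A" "z = restrict x S" by blast
      thus "z \<in> PiE S (\<lambda>_. V)" by (simp add: restrict_PiE_iff)
    qed
    show "(\<lambda>f i. if i \<in> S then f i else 0) ` PiE S (\<lambda>_. V) \<subseteq> ?A"
    proof
      fix z assume "z \<in> (\<lambda>f i. if i \<in> S then f i else 0) ` PiE S (\<lambda>_. V)"
      then obtain f where f: "f \<in> PiE S (\<lambda>_. V)" "z = (\<lambda>i. if i \<in> S then f i else 0)" by blast
      have "\<forall>i\<in>S. f i \<in> V" using PiE_mem[OF f(1)] by blast
      thus "z \<in> ?A" using f(2) by simp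
    qed
    show "\<forall>x\<in>?A. (\<lambda>i. if i \<in> S then restrict x S i else 0) = x"
    proof
      fix x assume x: "x \<in> ?A"
      show "(\<lambda>i. if i \<in> S then restrict x S i else 0) = x"
      proof (rule ext)
        fix i show "(if i \<in> S then restrict x S i else 0) = x i" using x by (cases "i \<in> S") simp_all
      qed
    qed
    show "\<forall>y\<in>PiE S (\<lambda>_. V). restrict (\<lambda>i. if i \<in> S then y i else 0) S = y"
    proof
      fix y assume y: "y \<in> PiE S (\<lambda>_. V)"
      show "restrict (\<lambda>i. if i \<in> S then y i else 0) S = y"
      proof (rule ext)
        fix i show "restrict (\<lambda>i. if i \<in> S then y i else 0) S i = y i"
          using PiE_arb[OF y, of i] by (cases "i \<in> S") simp_all
      qed
    qed
  qed
  hence "card ?A = card (PiE S (\<lambda>_. V))" by (rule bij_betw_same_card)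
  also have "\<dots> = card V ^ card S" using fin by (simp add: card_PiE)
  finally show ?thesis .
qed

lemma card_ball:
  "card (ball_B n t kp km) = (\<Sum>i\<le>t. (n choose i) * (kp + km) ^ i)"
proof -
  define V where "V = {- int km..int kp} - {0}"
  have cV: "card V = kp + km"
  proof -
    have "card {- int km..int kp} = kp + km + 1" by simp
    moreover have "0 \<in> {- int km..int kp}" by simp
    ultimately show ?thesis unfolding V_def by (simp add: card_Diff_singleton)
  qed
  have fV: "finite V" by (simp add: V_def)
  define P where "P = {S. S \<subseteq> {..<n} \<and> card S \<le> t}"
  define A where "A S = {x. (\<forall>i\<in>S. x i \<in> V) \<and> (\<forall>i. i \<notin> S \<longrightarrow> x i = 0)}" for S :: "nat set"
  have finP: "finite P" unfolding P_def by (rule finite_subset[of _ "Pow {..<n}"]) auto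
  have Beq: "ball_B n t kp km = (\<Union>S\<in>P. A S)"
  proof
    show "ball_B n t kp km \<subseteq> (\<Union>S\<in>P. A S)"
    proof
      fix x assume x: "x \<in> ball_B n t kp km"
      let ?S = "{i. i < n \<and> x i \<noteq> 0}"
      have "?S \<in> P" using x by (auto simp: ball_B_def hwt_def P_def)
      moreover have "x \<in> A ?S" using x by (auto simp: ball_B_def Zn_def A_def V_def)
      ultimately show "x \<in> (\<Union>S\<in>P. A S)" by blast
    qed
  next
    show "(\<Union>S\<in>P. A S) \<subseteq> ball_B n t kp km"
    proof
      fix x assume "x \<in> (\<Union>S\<in>P. A S)"
      then obtain S where S: "S \<in> P" "x \<in> A S" by blast
      have sub: "S \<subseteq> {..<n}" "card S \<le> t" using S(1) by (auto simp: P_def)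
      have xZ: "x \<in> Zn n" using S(2) sub by (auto simp: Zn_def A_def)
      have "{i. i < n \<and> x i \<noteq> 0} = S" using S(2) sub by (auto simp: A_def V_def)
      hence "hwt n x \<le> t" using sub by (simp add: hwt_def)
      moreover have "\<forall>i<n. - int km \<le> x i \<and> x i \<le> int kp"
        using S(2) by (auto simp: A_def V_def)
      ultimately show "x \<in> ball_B n t kp km" using xZ by (simp add: ball_B_def)
    qed
  qed
  have "card (\<Union>S\<in>P. A S) = (\<Sum>S\<in>P. card (A S))"
  proof (rule card_UN_disjoint[OF finP])
    show "\<forall>S\<in>P. finite (A S)"
    proof
      fix S assume S: "S \<in> P"
      have "finite S" using S by (auto simp: P_def intro: finite_subset)
      have "A S \<subseteq> (\<lambda>f i. if i \<in> S then f i else 0) ` PiE S (\<lambda>_. V)"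
      proof
        fix x assume x: "x \<in> A S"
        have "x = (\<lambda>i. if i \<in> S then restrict x S i else 0)" using x by (auto simp: A_def fun_eq_iff restrict_def)
        moreover have "restrict x S \<in> PiE S (\<lambda>_. V)" using x by (auto simp: A_def)
        ultimately show "x \<in> (\<lambda>f i. if i \<in> S then f i else 0) ` PiE S (\<lambda>_. V)" by blast
      qed
      moreover have "finite (PiE S (\<lambda>_. V))" using \<open>finite S\<close> fV by (intro finite_PiE) auto
      ultimately show "finite (A S)" by (meson finite_imageI finite_subset)
    qed
    show "\<forall>S\<in>P. \<forall>S'\<in>P. S \<noteq> S' \<longrightarrow> A S \<inter> A S' = {}"
    proof (intro ballI impI)
      fix S S' assume "S \<in> P" "S' \<in> P" "S \<noteq> S'"
      show "A S \<inter> A S' = {}"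
      proof (rule ccontr)
        assume "A S \<inter> A S' \<noteq> {}"
        then obtain x where x: "x \<in> A S" "x \<in> A S'" by blast
        have "S = {i. x i \<noteq> 0}" using x(1) by (auto simp: A_def V_def)
        moreover have "S' = {i. x i \<noteq> 0}" using x(2) by (auto simp: A_def V_def)
        ultimately show False using \<open>S \<noteq> S'\<close> by simp
      qed
    qed
  qed
  also have "\<dots> = (\<Sum>S\<in>P. (kp + km) ^ card S)"
  proof (rule sum.cong)
    fix S assume S: "S \<in> P"
    have "finite S" using S by (auto simp: P_def intro: finite_subset)
    thus "card (A S) = (kp + km) ^ card S" unfolding A_def cV[symmetric] by (rule card_piece) (simp add: V_def)
  qed simp
  also have "\<dots> = (\<Sum>i\<le>t. (\<Sum>S\<in>{S \<in> P. card S = i}. (kp + km) ^ card S))"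
    by (rule sum.group[symmetric]) (use finP in \<open>auto simp: P_def\<close>)
  also have "\<dots> = (\<Sum>i\<le>t. (n choose i) * (kp + km) ^ i)"
  proof (rule sum.cong)
    fix i assume i: "i \<in> {..t}"
    have "{S \<in> P. card S = i} = {S. S \<subseteq> {..<n} \<and> card S = i}" using i by (auto simp: P_def)
    moreover have "card {S. S \<subseteq> {..<n} \<and> card S = i} = n choose i"
      using n_subsets[of "{..<n}" i] by simp
    ultimately have "card {S \<in> P. card S = i} = n choose i" by simp
    moreover have "(\<Sum>S\<in>{S \<in> P. card S = i}. (kp + km) ^ card S) = (\<Sum>S\<in>{S \<in> P. card S = i}. (kp + km) ^ i)"
      by (rule sum.cong) auto
    ultimately show "(\<Sum>S\<in>{S \<in> P. card S = i}. (kp + km) ^ card S) = (n choose i) * (kp + km) ^ i" by simp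
  qed simp
  finally show ?thesis using Beq by simp
qed


lemma hwt_diff_le:
  assumes "x \<in> Zn n" "y \<in> Zn n"
  shows "hwt n (x - y) \<le> hwt n x + hwt n y"
proof -
  have "{i. i < n \<and> (x - y) i \<noteq> 0} \<subseteq> {i. i < n \<and> x i \<noteq> 0} \<union> {i. i < n \<and> y i \<noteq> 0}" by auto
  hence "card {i. i < n \<and> (x - y) i \<noteq> 0} \<le> card ({i. i < n \<and> x i \<noteq> 0} \<union> {i. i < n \<and> y i \<noteq> 0})"
    by (intro card_mono) auto
  also have "\<dots> \<le> card {i. i < n \<and> x i \<noteq> 0} + card {i. i < n \<and> y i \<noteq> 0}" by (rule card_Un_le)
  finally show ?thesis by (simp add: hwt_def)
qed

context acf_char
begin

lemma main_construction:
  assumes m: "m \<ge> 1" and K: "kp + km < p"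
  shows "\<exists>L. is_lattice_packing (p ^ m - 1) L (ball_B (p ^ m - 1) t kp km) \<and> finite (cosets (p ^ m - 1) L)
           \<and> vol (p ^ m - 1) L = p ^ (m * card {j \<in> {1..2*t}. \<not> p dvd j})"
proof -
  define n where "n = p ^ m - 1"
  define J where "J = {j \<in> {1..2*t}. \<not> p dvd j}"
  define r where "r = card J"
  have finJ: "finite J" by (simp add: J_def)
  have q2: "p ^ m \<ge> 2" using q_ge2[OF m] .
  have n1: "n \<ge> 1" using q2 by (simp add: n_def)
  have finF: "finite (FF m)" and cardF: "card (FF m) = p ^ m" using card_FF[OF m] by auto
  have "card (FF m - {\<zero>}) = n" using cardF finF FF_zero by (simp add: n_def card_Diff_singleton)
  then obtain b where bij: "bij_betw b {0..<n} (FF m - {\<zero>})"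
    using ex_bij_betw_nat_finite[of "FF m - {\<zero>}"] finF by auto
  have binj: "inj_on b {..<n}" using bij by (simp add: bij_betw_def lessThan_atLeast0)
  have bFF: "b i \<in> FF m - {\<zero>}" if "i < n" for i using bij_betw_apply[OF bij] that by simp
  have bF: "\<And>i. i < n \<Longrightarrow> b i \<in> FF m" and b0: "\<And>i. i < n \<Longrightarrow> b i \<noteq> \<zero>"
    using bFF by auto
  have bc: "\<And>i. i < n \<Longrightarrow> b i \<in> carrier R" using bF FF_carrier by blast
  define f0 where "f0 = th0 b n J"
  have h0: "homlike n f0" unfolding f0_def by (rule th0_homlike[OF bc])
  define L0 where "L0 = kerL n f0"
  have L0lat: "is_lattice n L0" unfolding L0_def by (rule lattice_ker[OF h0])
  have L0phi: "phi b n j x = \<zero>" if "x \<in> L0" "j \<in> J" for x j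
  proof -
    have "f0 x = f0 0" using that by (simp add: L0_def kerL_def)
    hence "phi b n j x = phi b n j 0" using that by (simp add: f0_def th0_def restrict_def fun_eq_iff) metis
    thus ?thesis using phi_zero_vec[OF bc] by simp
  qed
  have L0I: "x \<in> L0" if "x \<in> Zn n" "\<And>j. j \<in> J \<Longrightarrow> phi b n j x = \<zero>" for x
  proof -
    have "f0 x = f0 0" using that phi_zero_vec[OF bc] by (simp add: f0_def th0_def restrict_def fun_eq_iff)
    thus ?thesis using that by (simp add: L0_def kerL_def)
  qed
  have "card (f0 ` Zn n) dvd (card (FF m)) ^ card J" unfolding f0_def by (rule th0_card_dvd[OF bF finJ])
  hence "card (f0 ` Zn n) dvd p ^ (m * r)" using cardF by (simp add: r_def power_mult)
  then obtain e' where e': "e' \<le> m * r" "card (f0 ` Zn n) = p ^ e'"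
    using divides_primepow_nat[OF prime_p] by blast
  have fin0: "finite (f0 ` Zn n)"
  proof (rule ccontr)
    assume "infinite (f0 ` Zn n)"
    hence "card (f0 ` Zn n) = 0" by simp
    thus False using e'(2) p_gt1 by simp
  qed
  define M where "M = int p ^ (m * r - e') * (if \<exists>x\<in>L0. \<not> int p dvd x 0 then 1 else int p)"
  have Mpos: "M > 0" using p_gt1 by (simp add: M_def)
  define f where "f = (\<lambda>x. (f0 x, x 0 mod M))"
  have h: "homlike n f" unfolding f_def by (rule homlike_pair[OF h0])
  define L where "L = kerL n f"
  have LL0: "L \<subseteq> L0" unfolding L_def L0_def f_def by (rule ker_pair)
  have cardL0: "card ((\<lambda>x. x 0 mod M) ` L0) = p ^ (m * r - e')"
  proof (rule card_mod_image[OF prime_p])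
    show "\<And>x y. x \<in> L0 \<Longrightarrow> y \<in> L0 \<Longrightarrow> x + y \<in> L0" using L0lat by (simp add: is_lattice_def)
    show "\<And>x c. x \<in> L0 \<Longrightarrow> (\<lambda>i. c * x i) \<in> L0"
    proof -
      fix x c assume x: "x \<in> L0"
      have xZ: "x \<in> Zn n" using x by (simp add: L0_def kerL_def)
      show "(\<lambda>i. c * x i) \<in> L0"
      proof (rule L0I)
        show "(\<lambda>i. c * x i) \<in> Zn n" using xZ by (simp add: Zn_def)
        fix j assume j: "j \<in> J"
        show "phi b n j (\<lambda>i. c * x i) = \<zero>" using phi_smult[OF bc] L0phi[OF x j] by simp
      qed
    qed
    show "(\<lambda>i. if i = 0 then int p else 0) \<in> L0"
    proof (rule L0I)
      show "(\<lambda>i. if i = 0 then int p else 0) \<in> Zn n" using n1 by (simp add: Zn_def)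
      fix j show "phi b n j (\<lambda>i. if i = 0 then int p else 0) = \<zero>" by (rule phi_pdvd[OF _ bc]) simp
    qed
  qed (simp add: M_def)
  have cardf: "card (f ` Zn n) = p ^ (m * r)"
  proof -
    have "card (f ` Zn n) = card (f0 ` Zn n) * card ((\<lambda>x. x 0 mod M) ` kerL n f0)"
      unfolding f_def by (rule card_pair[OF h0 fin0 Mpos])
    also have "\<dots> = p ^ e' * p ^ (m * r - e')" using e' cardL0 by (simp add: L0_def)
    also have "\<dots> = p ^ (m * r)" using e'(1) by (simp add: power_add[symmetric])
    finally show ?thesis .
  qed
  have volL: "vol n L = p ^ (m * r)" unfolding vol_def L_def using card_cosets[OF h] cardf by simp
  have finL: "finite (cosets n L)"
  proof (rule ccontr)
    assume "infinite (cosets n L)"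
    hence "vol n L = 0" by (simp add: vol_def)
    thus False using volL p_gt1 by simp
  qed
  have Llat: "is_lattice n L" unfolding L_def by (rule lattice_ker[OF h])
  have pack: "is_lattice_packing n L (ball_B n t kp km)"
    unfolding is_lattice_packing_def
  proof (intro conjI ballI impI)
    show "is_lattice n L" by (rule Llat)
  next
    fix v w assume v: "v \<in> L" and w: "w \<in> L" and vw: "v \<noteq> w"
    show "(\<lambda>b. v + b) ` ball_B n t kp km \<inter> (\<lambda>b. w + b) ` ball_B n t kp km = {}"
    proof (rule ccontr)
      assume "(\<lambda>b. v + b) ` ball_B n t kp km \<inter> (\<lambda>b. w + b) ` ball_B n t kp km \<noteq> {}"
      then obtain b1 b2 where b1: "b1 \<in> ball_B n t kp km" and b2: "b2 \<in> ball_B n t kp km"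
        and eq: "v + b1 = w + b2" by blast
      define d where "d = v - w"
      have dL: "d \<in> L0"
      proof -
        have "- w \<in> L" using Llat w by (simp add: is_lattice_def)
        hence "v + - w \<in> L" using Llat v unfolding is_lattice_def by blast
        thus ?thesis using LL0 unfolding d_def by auto
      qed
      have db: "d = b2 - b1" using eq by (simp add: d_def algebra_simps fun_eq_iff)
      have b1Z: "b1 \<in> Zn n" and b2Z: "b2 \<in> Zn n" using b1 b2 by (auto simp: ball_B_def)
      have dZ: "d \<in> Zn n" using db b1Z b2Z Zn_diff by blast
      have d0: "d \<noteq> 0" using vw by (simp add: d_def)
      have dex: "\<exists>i<n. d i \<noteq> 0"
      proof (rule ccontr)
        assume "\<not> (\<exists>i<n. d i \<noteq> 0)"
        hence "d = 0" using dZ by (auto simp: Zn_def fun_eq_iff not_less)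
        thus False using d0 by simp
      qed
      have dabs: "\<bar>d i\<bar> < int p" if "i < n" for i
      proof -
        have "- int km \<le> b1 i" "b1 i \<le> int kp" "- int km \<le> b2 i" "b2 i \<le> int kp"
          using b1 b2 that by (auto simp: ball_B_def)
        thus ?thesis using K db by auto
      qed
      have hw: "hwt n d \<le> 2 * t"
      proof -
        have "hwt n d \<le> hwt n b2 + hwt n b1" using hwt_diff_le[OF b2Z b1Z] db by simp
        moreover have "hwt n b1 \<le> t" "hwt n b2 \<le> t" using b1 b2 by (auto simp: ball_B_def)
        ultimately show ?thesis by simp
      qed
      obtain j where j: "j \<in> {1..hwt n d}" and jnz: "phi b n j d \<noteq> \<zero>"
        using phi_nz[OF binj _ dabs dex] bc b0 by blast
      have "\<exists>j'\<in>{j \<in> {1..2*t}. \<not> p dvd j}. phi b n j' d \<noteq> \<zero>"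
        by (rule phi_J[where b=b and n=n]) (use bc j jnz hw in auto)
      then obtain j' where j': "j' \<in> J" and j'nz: "phi b n j' d \<noteq> \<zero>" unfolding J_def by blast
      show False using L0phi[OF dL j'] j'nz by simp
    qed
  qed
  show ?thesis unfolding n_def[symmetric] using pack finL volL by (auto simp: r_def J_def)
qed

end


lemma exists_acf:
  assumes pp: "Factorial_Ring.prime p"
  shows "\<exists>(R :: ((int list \<times> nat) multiset \<Rightarrow> int) ring) iota. acf_char R p iota"
proof -
  define R0 where "R0 = residue_ring (int p)"
  interpret RP: residues_prime p R0 using pp unfolding R0_def by unfold_locales
  have fR0: "field R0" using RP.is_field .
  define Om where "Om = RP.alg_closure"
  define h :: "int \<Rightarrow> ((int list \<times> nat) multiset \<Rightarrow> int)" where "h = RP.indexed_const"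
  have acl: "algebraic_closure Om (h ` carrier R0)" unfolding Om_def h_def by (rule RP.alg_closureE)
  have hh: "h \<in> ring_hom R0 Om" unfolding Om_def h_def by (rule RP.alg_closureE)
  interpret A: algebraic_closure Om "h ` carrier R0" by (rule acl)
  have acOm: "algebraically_closed Om"
    by (intro algebraically_closed.intro A.field_axioms algebraically_closed_axioms.intro A.roots_over_carrier)
  define iota where "iota k = h (k mod int p)" for k
  have p1: "int p > 1" using pp prime_gt_1_nat by auto
  have mc: "k mod int p \<in> carrier R0" for k using RP.mod_in_carrier by simp
  have "acf_char Om p iota"
  proof (intro acf_char.intro acOm acf_char_axioms.intro pp)
    fix k show "iota k \<in> carrier Om" unfolding iota_def using hh mc by (rule ring_hom_closed)
  next
    fix a b
    have "iota (a + b) = h ((a mod int p) \<oplus>\<^bsub>R0\<^esub> (b mod int p))" by (simp add: iota_def RP.add_cong)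
    also have "\<dots> = iota a \<oplus>\<^bsub>Om\<^esub> iota b" unfolding iota_def by (rule ring_hom_add[OF hh mc mc])
    finally show "iota (a + b) = iota a \<oplus>\<^bsub>Om\<^esub> iota b" .
  next
    fix a b
    have "iota (a * b) = h ((a mod int p) \<otimes>\<^bsub>R0\<^esub> (b mod int p))" by (simp add: iota_def RP.mult_cong)
    also have "\<dots> = iota a \<otimes>\<^bsub>Om\<^esub> iota b" unfolding iota_def by (rule ring_hom_mult[OF hh mc mc])
    finally show "iota (a * b) = iota a \<otimes>\<^bsub>Om\<^esub> iota b" .
  next
    have "iota 1 = h \<one>\<^bsub>R0\<^esub>" using p1 by (simp add: iota_def RP.res_one_eq)
    thus "iota 1 = \<one>\<^bsub>Om\<^esub>" using ring_hom_one[OF hh] by simp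
  next
    fix k
    have h0: "h \<zero>\<^bsub>R0\<^esub> = \<zero>\<^bsub>Om\<^esub>" by (rule ring_hom_zero[OF hh RP.ring_axioms A.ring_axioms])
    show "iota k = \<zero>\<^bsub>Om\<^esub> \<longleftrightarrow> int p dvd k"
    proof
      assume "int p dvd k"
      hence "k mod int p = \<zero>\<^bsub>R0\<^esub>" by (simp add: RP.res_zero_eq)
      thus "iota k = \<zero>\<^bsub>Om\<^esub>" using h0 by (simp add: iota_def)
    next
      assume z: "iota k = \<zero>\<^bsub>Om\<^esub>"
      show "int p dvd k"
      proof (rule ccontr)
        assume nd: "\<not> int p dvd k"
        define x where "x = k mod int p"
        have x: "x \<in> carrier R0" using mc by (simp add: x_def)
        have x0: "x \<noteq> \<zero>\<^bsub>R0\<^esub>" using nd by (simp add: x_def RP.res_zero_eq dvd_eq_mod_eq_0)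
        have xu: "x \<in> Units R0" using x x0 RP.field_Units by simp
        have "h (x \<otimes>\<^bsub>R0\<^esub> inv\<^bsub>R0\<^esub> x) = h x \<otimes>\<^bsub>Om\<^esub> h (inv\<^bsub>R0\<^esub> x)"
          by (rule ring_hom_mult[OF hh x]) (use xu in simp)
        moreover have "h x = \<zero>\<^bsub>Om\<^esub>" using z by (simp add: iota_def x_def)
        moreover have "h (inv\<^bsub>R0\<^esub> x) \<in> carrier Om" by (rule ring_hom_closed[OF hh]) (use xu in simp)
        ultimately have "h \<one>\<^bsub>R0\<^esub> = \<zero>\<^bsub>Om\<^esub>" using xu by simp
        thus False using ring_hom_one[OF hh] A.one_not_zero by simp
      qed
    qed
  qed
  thus ?thesis unfolding Om_def by blast
qed


lemma psi_prop: "Factorial_Ring.prime (psi x) \<and> x \<le> psi x"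
proof -
  obtain q where q: "Factorial_Ring.prime q" "x < q" using bigger_prime by blast
  hence "Factorial_Ring.prime q \<and> x \<le> q" by simp
  thus ?thesis unfolding psi_def by (rule LeastI)
qed

lemma card_dvd_set:
  assumes p: "p > (0::nat)"
  shows "card {j \<in> {1..N}. p dvd j} = N div p"
proof -
  have "{j \<in> {1..N}. p dvd j} = (\<lambda>k. p * k) ` {1..N div p}"
  proof
    show "{j \<in> {1..N}. p dvd j} \<subseteq> (\<lambda>k. p * k) ` {1..N div p}"
    proof
      fix j assume j: "j \<in> {j \<in> {1..N}. p dvd j}"
      then obtain k where k: "j = p * k" by blast
      have "k \<ge> 1" using j k by (cases k) auto
      moreover have "k \<le> N div p" using j k p by (simp add: less_eq_div_iff_mult_less_eq mult.commute)
      ultimately show "j \<in> (\<lambda>k. p * k) ` {1..N div p}" using k by auto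
    qed
    show "(\<lambda>k. p * k) ` {1..N div p} \<subseteq> {j \<in> {1..N}. p dvd j}"
    proof
      fix j assume "j \<in> (\<lambda>k. p * k) ` {1..N div p}"
      then obtain k where k: "k \<in> {1..N div p}" "j = p * k" by blast
      have "p * k \<le> p * (N div p)" using k by simp
      also have "\<dots> \<le> N" by simp
      finally have "j \<le> N" using k by simp
      moreover have "j \<ge> 1" using k p by simp
      ultimately show "j \<in> {j \<in> {1..N}. p dvd j}" using k by auto
    qed
  qed
  moreover have "inj_on (\<lambda>k. p * k) {1..N div p}" using p by (intro inj_onI) simp
  ultimately show ?thesis by (simp add: card_image)
qed

lemma card_J:
  assumes p: "p > (0::nat)"
  shows "card {j \<in> {1..N}. \<not> p dvd j} = N - N div p"
proof -
  have "{j \<in> {1..N}. \<not> p dvd j} = {1..N} - {j \<in> {1..N}. p dvd j}" by auto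
  moreover have "card ({1..N} - {j \<in> {1..N}. p dvd j}) = card {1..N} - card {j \<in> {1..N}. p dvd j}"
    by (rule card_Diff_subset) auto
  ultimately have "card {j \<in> {1..N}. \<not> p dvd j} = card {1..N} - card {j \<in> {1..N}. p dvd j}"
    by simp
  thus ?thesis using card_dvd_set[OF p] by simp
qed

lemma exponent_eq:
  assumes p: "p > (0::nat)"
  shows "nat \<lceil>2 * real t * (1 - 1 / real p)\<rceil> = 2 * t - 2 * t div p"
proof -
  have "2 * real t * (1 - 1 / real p) = - (real (2 * t) / real p) + real_of_int (int (2 * t))"
    by (simp add: algebra_simps)
  hence "\<lceil>2 * real t * (1 - 1 / real p)\<rceil> = - \<lfloor>real (2 * t) / real p\<rfloor> + int (2 * t)"
    by (simp only: ceiling_add_of_int ceiling_minus)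
  also have "\<lfloor>real (2 * t) / real p\<rfloor> = int (2 * t div p)" by (rule floor_divide_of_nat_eq)
  finally have "\<lceil>2 * real t * (1 - 1 / real p)\<rceil> = int (2 * t) - int (2 * t div p)" by simp
  moreover have "2 * t div p \<le> 2 * t" by simp
  ultimately show ?thesis by simp
qed

theorem corollary2:
  fixes kp km m t :: nat
  assumes "km \<le> kp"
    and "m > 0" and "t > 0"
    and "2 * int t \<le> int (psi (kp + km + 1)) ^ nat \<lceil>real m / 2\<rceil> - 2"
  shows "\<exists>L. is_lattice_packing (psi (kp + km + 1) ^ m - 1) L
                 (ball_B (psi (kp + km + 1) ^ m - 1) t kp km)
            \<and> finite (cosets (psi (kp + km + 1) ^ m - 1) L)
            \<and> density (psi (kp + km + 1) ^ m - 1) L (ball_B (psi (kp + km + 1) ^ m - 1) t kp km)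
              = (\<Sum>i\<le>t. real ((psi (kp + km + 1) ^ m - 1) choose i) * real (kp + km) ^ i)
                / real (psi (kp + km + 1) ^ m) ^ nat \<lceil>2 * real t * (1 - 1 / real (psi (kp + km + 1)))\<rceil>"
proof -
  define p where "p = psi (kp + km + 1)"
  have pp: "Factorial_Ring.prime p" and pK: "kp + km + 1 \<le> p" using psi_prop[of "kp + km + 1"] by (auto simp: p_def)
  have p0: "p > 0" using pp prime_gt_0_nat by blast
  obtain R :: "((int list \<times> nat) multiset \<Rightarrow> int) ring" and iota where ac: "acf_char R p iota"
    using exists_acf[OF pp] by blast
  have m1: "m \<ge> 1" using assms(2) by simp
  obtain L where L: "is_lattice_packing (p ^ m - 1) L (ball_B (p ^ m - 1) t kp km)"
      "finite (cosets (p ^ m - 1) L)"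
      "vol (p ^ m - 1) L = p ^ (m * card {j \<in> {1..2*t}. \<not> p dvd j})"
    using acf_char.main_construction[OF ac m1, of kp km t] pK by auto
  define n where "n = p ^ m - 1"
  have cJ: "card {j \<in> {1..2*t}. \<not> p dvd j} = nat \<lceil>2 * real t * (1 - 1 / real p)\<rceil>"
    using card_J[OF p0, of "2 * t"] exponent_eq[OF p0, of t] by simp
  have vol: "real (vol n L) = real (p ^ m) ^ nat \<lceil>2 * real t * (1 - 1 / real p)\<rceil>"
    using L(3) cJ by (simp add: n_def power_mult)
  have cb: "real (card (ball_B n t kp km)) = (\<Sum>i\<le>t. real (n choose i) * real (kp + km) ^ i)"
    using card_ball[of n t kp km] by simp
  have "density n L (ball_B n t kp km) = (\<Sum>i\<le>t. real (n choose i) * real (kp + km) ^ i)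
                / real (p ^ m) ^ nat \<lceil>2 * real t * (1 - 1 / real p)\<rceil>"
    unfolding density_def using vol cb by simp
  thus ?thesis using L unfolding p_def[symmetric] n_def by blast
qed


end
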